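(* Let $\psi$ be a saturation with saturation level $\alpha>0$, let $u:[0,L]\to\mathbb{R}$ be a given velocity, and consider the explicit finite-volume scheme for $\partial_t\rho+\partial_x(\rho\psi(\rho)u(x))=0$ on $(0,L)$ described in the context. Fix $n$ and suppose $0\le\rho_i^n\le\alpha$ for all $i$. Then the updated values satisfy $0\le\rho_i^{n+1}\le\alpha$ for all $i$, provided $$\Delta t\le \Gamma\,\frac{\Delta x}{2\max_i|u_{i+1/2}|},\qquad \Gamma=\min\Big\{\frac{1}{\psi(0)},\gamma\Big\},\qquad \gamma=\inf_{s\in(0,\alpha)}\frac{\alpha-s}{\alpha\psi(s)}.$$
   Context: A saturation is a continuous function $\psi:[0,\infty)\to\mathbb{R}$ that is non-increasing and for which there is $\alpha>0$ (the saturation level) with $\psi(\alpha)=0$ and $(\alpha-s)\psi(s)>0$ for $s\neq\alpha$. Discretisation: $\Delta x=L/M$, cells $C_i=(x_{i-1/2},x_{i+1/2})$ with centres $x_i=\Delta x(i-1/2)$, $i=1,\dots,M$; time steps $t^n=n\Delta t$; $\rho_i^n$ is the value on cell $C_i$ at time $t^n$. The scheme is $$\frac{\rho_i^{n+1}-\rho_i^n}{\Delta t}+\frac{F_{i+1/2}^n-F_{i-1/2}^n}{\Delta x}=0,\qquad F_{i+1/2}^n=\rho_i^E\psi_{i+1}^W u_{i+1/2}^++\rho_{i+1}^W\psi_i^E u_{i+1/2}^-,$$ with no-flux boundary conditions $F_{1/2}^n=F_{M+1/2}^n=0$, where $u_{i+1/2}=u(x_{i+1/2})$, $a^+=\max\{a,0\}$,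 $a^-=\min\{a,0\}$, $\rho_i^E=\rho_i^n+\frac{\Delta x}{2}(\rho_x)_i^n$, $\rho_i^W=\rho_i^n-\frac{\Delta x}{2}(\rho_x)_i^n$, $\psi_i^E=\psi(\rho_i^E)$, $\psi_i^W=\psi(\rho_i^W)$, and $$(\rho_x)_i^n=\mathrm{minmod}\Big(\theta\frac{\rho_{i+1}^n-\rho_i^n}{\Delta x},\frac{\rho_{i+1}^n-\rho_{i-1}^n}{2\Delta x},\theta\frac{\rho_i^n-\rho_{i-1}^n}{\Delta x}\Big),\quad \theta=2,$$ where $\mathrm{minmod}(a,b,c)=\min(a,b,c)$ if $a,b,c>0$, $\max(a,b,c)$ if $a,b,c<0$, and $0$ otherwise. The hypothesis "$0\le\rho_i^n\le\alpha$ for all $i$" applies to all values entering the slope computations. *)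

theory Defs
  imports "HOL-Analysis.Analysis"
begin

definition saturation :: "(real \<Rightarrow> real) \<Rightarrow> real \<Rightarrow> bool" where
  "saturation psi alpha \<longleftrightarrow>
     continuous_on {0..} psi \<and>
     (\<forall>s t. 0 \<le> s \<longrightarrow> s \<le> t \<longrightarrow> psi t \<le> psi s) \<and>
     alpha > 0 \<and> psi alpha = 0 \<and>
     (\<forall>s. 0 \<le> s \<longrightarrow> s \<noteq> alpha \<longrightarrow> (alpha - s) * psi s > 0)"

definition minmod3 :: "real \<Rightarrow> real \<Rightarrow> real \<Rightarrow> real" where
  "minmod3 a b c =
     (if a > 0 \<and> b > 0 \<and> c > 0 then min a (min b c)
      else if a < 0 \<and> b < 0 \<and> c < 0 then max a (max b c)
      else 0)"

text \<open>Cell values are rho i; cells are i = 1..M; the values rho 0 and rho (M+1)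
  are ghost values entering the slope computations at the boundary cells.\<close>

definition theta :: real where "theta = 2"

definition slope :: "real \<Rightarrow> (nat \<Rightarrow> real) \<Rightarrow> nat \<Rightarrow> real" where
  "slope dx rho i = minmod3 (theta * (rho (i+1) - rho i) / dx)
                            ((rho (i+1) - rho (i-1)) / (2 * dx))
                            (theta * (rho i - rho (i-1)) / dx)"

definition rhoE :: "real \<Rightarrow> (nat \<Rightarrow> real) \<Rightarrow> nat \<Rightarrow> real" where
  "rhoE dx rho i = rho i + dx / 2 * slope dx rho i"

definition rhoW :: "real \<Rightarrow> (nat \<Rightarrow> real) \<Rightarrow> nat \<Rightarrow> real" where
  "rhoW dx rho i = rho i - dx / 2 * slope dx rho i"

text \<open>Numerical flux at interface x_{i+1/2} = i*dx, for i = 0..M (no-flux at 0 and M).\<close>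
definition flux :: "(real \<Rightarrow> real) \<Rightarrow> (real \<Rightarrow> real) \<Rightarrow> real \<Rightarrow> nat \<Rightarrow> (nat \<Rightarrow> real) \<Rightarrow> nat \<Rightarrow> real" where
  "flux psi u L M rho i =
     (let dx = L / real M; ui = u (real i * dx) in
      if i = 0 \<or> i \<ge> M then 0
      else rhoE dx rho i * psi (rhoW dx rho (i+1)) * max ui 0
         + rhoW dx rho (i+1) * psi (rhoE dx rho i) * min ui 0)"

definition scheme_step :: "(real \<Rightarrow> real) \<Rightarrow> (real \<Rightarrow> real) \<Rightarrow> real \<Rightarrow> nat \<Rightarrow> real \<Rightarrow> (nat \<Rightarrow> real) \<Rightarrow> nat \<Rightarrow> real" where
  "scheme_step psi u L M dt rho i =
     rho i - dt / (L / real M) * (flux psi u L M rho i - flux psi u L M rho (i-1))"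

definition gamma_sat :: "(real \<Rightarrow> real) \<Rightarrow> real \<Rightarrow> real" where
  "gamma_sat psi alpha = Inf ((\<lambda>s. (alpha - s) / (alpha * psi s)) ` {0<..<alpha})"

definition Gamma_sat :: "(real \<Rightarrow> real) \<Rightarrow> real \<Rightarrow> real" where
  "Gamma_sat psi alpha = min (1 / psi 0) (gamma_sat psi alpha)"

definition umax :: "(real \<Rightarrow> real) \<Rightarrow> real \<Rightarrow> nat \<Rightarrow> real" where
  "umax u L M = Max ((\<lambda>i. \<bar>u (real i * (L / real M))\<bar>) ` {0..M})"

end

theory Submission
  imports Defs
begin

lemma recon:
  assumes dx: "dx > 0" and a: "0 \<le> rho (i-1)" "rho (i-1) \<le> alpha"
    and b: "0 \<le> rho i" "rho i \<le> alpha" and c: "0 \<le> rho (i+1)" "rho (i+1) \<le> alpha"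
  shows "0 \<le> rhoE dx rho i \<and> rhoE dx rho i \<le> alpha \<and> 0 \<le> rhoW dx rho i \<and> rhoW dx rho i \<le> alpha"
proof -
  define d1 where "d1 = rho (i+1) - rho i"
  define d0 where "d0 = rho i - rho (i-1)"
  define sl where "sl = slope dx rho i"
  have sl: "sl = minmod3 (2 * d1 / dx) ((d1 + d0) / (2*dx)) (2 * d0 / dx)"
    unfolding sl_def slope_def theta_def d1_def d0_def by (simp add: algebra_simps)
  have h: "(0 \<le> (dx / 2 * sl) \<and> (dx / 2 * sl) \<le> d1 \<and> (dx / 2 * sl) \<le> d0) \<or> (d1 \<le> (dx / 2 * sl) \<and> d0 \<le> (dx / 2 * sl) \<and> (dx / 2 * sl) \<le> 0) \<or> sl = 0"
  proof (cases "2 * d1 / dx > 0 \<and> (d1 + d0) / (2*dx) > 0 \<and> 2 * d0 / dx > 0")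
    case True
    then have "sl \<le> 2*d1/dx" "sl \<le> 2*d0/dx" "sl > 0" using sl unfolding minmod3_def by auto
    then have "sl * dx \<le> 2*d1" "sl*dx \<le> 2*d0" "sl*dx > 0"
      using dx by (auto simp: pos_le_divide_eq)
    then show ?thesis using dx by (simp add: mult.commute)
  next
    case F: False
    show ?thesis
    proof (cases "2 * d1 / dx < 0 \<and> (d1 + d0) / (2*dx) < 0 \<and> 2 * d0 / dx < 0")
      case True
      then have "sl \<ge> 2*d1/dx" "sl \<ge> 2*d0/dx" "sl < 0" using sl F unfolding minmod3_def by auto
      then have "sl * dx \<ge> 2*d1" "sl*dx \<ge> 2*d0" "sl*dx < 0"
        using dx by (auto simp: pos_divide_le_eq mult_neg_pos)
      then show ?thesis using dx by (simp add: mult.commute)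
    next
      case False
      then have "sl = 0" using sl F unfolding minmod3_def by auto
      then show ?thesis by simp
    qed
  qed
  show ?thesis using h a b c unfolding rhoE_def rhoW_def sl_def[symmetric] d1_def d0_def by auto
qed

lemma flux_bounds:
  fixes a b v U c P0 alpha pa pb :: real
  assumes a: "0 \<le> a" "a \<le> alpha" and b: "0 \<le> b" "b \<le> alpha" and v: "\<bar>v\<bar> \<le> U"
    and c: "c \<ge> 0" and pa: "0 \<le> pa" "pa \<le> P0" and pb: "0 \<le> pb" "pb \<le> P0"
    and k0: "c * P0 * U \<le> 1/2"
    and ka: "c * alpha * pa * U \<le> (alpha - a)/2"
    and kb: "c * alpha * pb * U \<le> (alpha - b)/2"
  defines "F \<equiv> a * pb * max v 0 + b * pa * min v 0"
  shows "c * F \<le> a/2 \<and> - (c * F) \<le> (alpha - a)/2 \<and> - (c * F) \<le> b/2 \<and> c * F \<le> (alpha - b)/2"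
proof -
  have vp: "0 \<le> max v 0" "max v 0 \<le> U" using v by auto
  have vm: "min v 0 \<le> 0" "- min v 0 \<le> U" using v by auto
  have t1: "0 \<le> a * pb * max v 0" using a pb vp by simp
  have t1a: "a * pb * max v 0 \<le> a * P0 * U" using a pb vp
    by (intro mult_mono) (auto intro: mult_mono)
  have t1b: "a * pb * max v 0 \<le> alpha * pb * U" using a pb vp
    by (intro mult_mono) (auto intro: mult_mono)
  have t2: "b * pa * min v 0 \<le> 0" using b pa vm by (simp add: mult_nonneg_nonpos)
  have t2a: "b * pa * (- min v 0) \<le> b * P0 * U" using b pa vm
    by (intro mult_mono) (auto intro: mult_mono)
  have t2b: "b * pa * (- min v 0) \<le> alpha * pa * U" using b pa vm
    by (intro mult_mono) (auto intro: mult_mono)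
  have e1: "c * (a * P0 * U) \<le> a/2"
  proof -
    have "c * (a * P0 * U) = a * (c * P0 * U)" by simp
    also have "\<dots> \<le> a * (1/2)" using a k0 by (intro mult_left_mono) auto
    finally show ?thesis by simp
  qed
  have e2: "c * (b * P0 * U) \<le> b/2"
  proof -
    have "c * (b * P0 * U) = b * (c * P0 * U)" by simp
    also have "\<dots> \<le> b * (1/2)" using b k0 by (intro mult_left_mono) auto
    finally show ?thesis by simp
  qed
  have "c * F \<le> c * (a * P0 * U)" unfolding F_def using t1a t2 c by (intro mult_left_mono) auto
  moreover have "c * F \<le> c * (alpha * pb * U)" unfolding F_def using t1b t2 c by (intro mult_left_mono) auto
  moreover have "- (c * F) \<le> c * (b * P0 * U)"
  proof -
    have "- F \<le> b * P0 * U" unfolding F_def using t1 t2a by linarith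
    then have "c * (- F) \<le> c * (b * P0 * U)" using c by (rule mult_left_mono)
    then show ?thesis by simp
  qed
  moreover have "- (c * F) \<le> c * (alpha * pa * U)"
  proof -
    have "- F \<le> alpha * pa * U" unfolding F_def using t1 t2b by linarith
    then have "c * (- F) \<le> c * (alpha * pa * U)" using c by (rule mult_left_mono)
    then show ?thesis by simp
  qed
  ultimately show ?thesis using e1 e2 ka kb by (simp add: algebra_simps)
qed

theorem proposition2p4:
  fixes psi u :: "real \<Rightarrow> real" and alpha L dt :: real and M :: nat and rho :: "nat \<Rightarrow> real"
  assumes sat: "saturation psi alpha"
    and L: "L > 0" and M: "M \<ge> 1" and dt: "dt > 0"
    and bounds: "\<forall>i \<in> {0..M+1}. 0 \<le> rho i \<and> rho i \<le> alpha"
    and cfl: "dt * (2 * umax u L M) \<le> Gamma_sat psi alpha * (L / real M)"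
  shows "\<forall>i \<in> {1..M}. 0 \<le> scheme_step psi u L M dt rho i \<and> scheme_step psi u L M dt rho i \<le> alpha"
proof
  define dx where "dx = L / real M"
  define c where "c = dt / dx"
  define U where "U = umax u L M"
  have dx: "dx > 0" unfolding dx_def using L M by simp
  have c: "c \<ge> 0" unfolding c_def using dx dt by simp
  have mono: "\<And>s t. 0 \<le> s \<Longrightarrow> s \<le> t \<Longrightarrow> psi t \<le> psi s"
    and al: "alpha > 0" and pal: "psi alpha = 0"
    and pos: "\<And>s. 0 \<le> s \<Longrightarrow> s \<noteq> alpha \<Longrightarrow> (alpha - s) * psi s > 0"
    using sat unfolding saturation_def by auto
  have p0: "psi 0 > 0" using pos[of 0] al by (simp add: zero_less_mult_iff)
  have pnn: "0 \<le> psi x \<and> psi x \<le> psi 0" if "0 \<le> x" "x \<le> alpha" for x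
  proof -
    have "0 \<le> psi x"
    proof (cases "x = alpha")
      case True then show ?thesis using pal by simp
    next
      case False
      then have "(alpha - x) * psi x > 0" using pos that by auto
      moreover have "alpha - x > 0" using False that by simp
      ultimately show ?thesis by (simp add: zero_less_mult_iff)
    qed
    then show ?thesis using mono[of 0 x] that by simp
  qed
  have Ub: "\<bar>u (real k * dx)\<bar> \<le> U" if "k \<le> M" for k
    unfolding U_def umax_def dx_def using that by (intro Max_ge) auto
  have U0: "U \<ge> 0" using Ub[of 0] by simp
  have cU: "2 * c * U \<le> Gamma_sat psi alpha"
  proof -
    have "dt * (2 * U) \<le> Gamma_sat psi alpha * dx" using cfl unfolding U_def dx_def .
    then have "dt * (2 * U) / dx \<le> Gamma_sat psi alpha" using dx by (simp add: pos_divide_le_eq)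
    then show ?thesis unfolding c_def by (simp add: field_simps)
  qed
  have k0: "c * psi 0 * U \<le> 1/2"
  proof -
    have "2 * c * U \<le> 1 / psi 0" using cU unfolding Gamma_sat_def by simp
    then have "2 * c * U * psi 0 \<le> 1" using p0 by (simp add: pos_le_divide_eq)
    then show ?thesis by (simp add: algebra_simps)
  qed
  have kx: "c * alpha * psi x * U \<le> (alpha - x)/2" if x: "0 \<le> x" "x \<le> alpha" for x
  proof (cases "x = alpha")
    case True then show ?thesis using pal by simp
  next
    case F1: False
    show ?thesis
    proof (cases "x = 0")
      case True
      have "c * alpha * psi 0 * U = alpha * (c * psi 0 * U)" by simp
      also have "\<dots> \<le> alpha * (1/2)" using k0 al by (intro mult_left_mono) auto
      finally show ?thesis using True by simp
    next
      case False
      have xin: "x \<in> {0<..<alpha}" using False F1 x by auto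
      have px: "psi x > 0" using pnn[OF x] pos[of x] x F1 by (auto simp: zero_less_mult_iff)
      have bdd: "bdd_below ((\<lambda>s. (alpha - s) / (alpha * psi s)) ` {0<..<alpha})"
      proof (rule bdd_belowI[of _ 0])
        fix y assume "y \<in> (\<lambda>s. (alpha - s) / (alpha * psi s)) ` {0<..<alpha}"
        then obtain s where s: "s \<in> {0<..<alpha}" "y = (alpha - s) / (alpha * psi s)" by auto
        have "psi s \<ge> 0" using pnn[of s] s by auto
        then show "0 \<le> y" using s al by simp
      qed
      have "gamma_sat psi alpha \<le> (alpha - x) / (alpha * psi x)"
        unfolding gamma_sat_def using xin bdd by (intro cInf_lower) auto
      then have "2 * c * U \<le> (alpha - x) / (alpha * psi x)" using cU unfolding Gamma_sat_def by simp
      then have "2 * c * U * (alpha * psi x) \<le> alpha - x" using px al by (simp add: pos_le_divide_eq)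
      then show ?thesis by (simp add: algebra_simps)
    qed
  qed
  have rec: "0 \<le> rhoE dx rho k \<and> rhoE dx rho k \<le> alpha \<and> 0 \<le> rhoW dx rho k \<and> rhoW dx rho k \<le> alpha"
    if "1 \<le> k" "k \<le> M" for k
    using recon[OF dx, of rho k alpha] bounds that by simp
  have FB: "c * F \<le> a/2 \<and> - (c * F) \<le> (alpha - a)/2 \<and> - (c * F) \<le> b/2 \<and> c * F \<le> (alpha - b)/2"
    if "F = a * psi b * max v 0 + b * psi a * min v 0" "0 \<le> a" "a \<le> alpha" "0 \<le> b" "b \<le> alpha"
      "\<bar>v\<bar> \<le> U" for F a b v
    using flux_bounds[of a alpha b v U c "psi a" "psi 0" "psi b"] that c pnn[of a] pnn[of b] k0 kx[of a] kx[of b]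
    by simp
  fix i assume i: "i \<in> {1..M}"
  define E where "E = rhoE dx rho i"
  define W where "W = rhoW dx rho i"
  define Fr where "Fr = flux psi u L M rho i"
  define Fl where "Fl = flux psi u L M rho (i-1)"
  have EW: "0 \<le> E" "E \<le> alpha" "0 \<le> W" "W \<le> alpha" using rec[of i] i unfolding E_def W_def by auto
  have rhoi: "rho i = (E + W) / 2" unfolding E_def W_def rhoE_def rhoW_def by simp
  have R: "c * Fr \<le> E/2 \<and> - (c * Fr) \<le> (alpha - E)/2"
  proof (cases "i < M")
    case True
    have "Fr = E * psi (rhoW dx rho (i+1)) * max (u (real i * dx)) 0 + rhoW dx rho (i+1) * psi E * min (u (real i * dx)) 0"
      unfolding Fr_def flux_def E_def dx_def Let_def using True i by auto
    then show ?thesis using FB[of Fr E "rhoW dx rho (i+1)" "u (real i * dx)"] EW rec[of "i+1"] True Ub[of i] by auto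
  next
    case False
    then have "Fr = 0" unfolding Fr_def flux_def by auto
    then show ?thesis using EW by simp
  qed
  have Lf: "- (c * Fl) \<le> W/2 \<and> c * Fl \<le> (alpha - W)/2"
  proof (cases "i = 1")
    case False
    then have i1: "i - 1 \<ge> 1" "i - 1 < M" "i - 1 + 1 = i" using i by auto
    have "Fl = rhoE dx rho (i-1) * psi W * max (u (real (i-1) * dx)) 0 + W * psi (rhoE dx rho (i-1)) * min (u (real (i-1) * dx)) 0"
      unfolding Fl_def flux_def W_def dx_def Let_def using i1 by auto
    then show ?thesis using FB[of Fl "rhoE dx rho (i-1)" W "u (real (i-1) * dx)"] EW rec[of "i-1"] i1 Ub[of "i-1"] by auto
  next
    case True
    then have "Fl = 0" unfolding Fl_def flux_def by auto
    then show ?thesis using EW by simp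
  qed
  have eq: "scheme_step psi u L M dt rho i = rho i - c * Fr + c * Fl"
    unfolding scheme_step_def c_def dx_def Fr_def Fl_def by (simp add: algebra_simps)
  have "0 \<le> scheme_step psi u L M dt rho i"
    using eq conjunct1[OF R] conjunct2[OF R] conjunct1[OF Lf] conjunct2[OF Lf] rhoi
    by (simp only: eq rhoi) argo
  moreover have "scheme_step psi u L M dt rho i \<le> alpha"
    using eq conjunct1[OF R] conjunct2[OF R] conjunct1[OF Lf] conjunct2[OF Lf] rhoi
    by (simp only: eq rhoi) argo
  ultimately show "0 \<le> scheme_step psi u L M dt rho i \<and> scheme_step psi u L M dt rho i \<le> alpha"
    by simp
qed

end
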